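(* Let $\mathbb{F}$ be $\mathbb{R}$ or $\mathbb{C}$, and let $U\in\mathbb{F}(\epsilon)^{r\times n}$ be such that for every $S\subseteq[n]$ of size $r$, $\lim_{\epsilon\to0}\det(U_S)$ exists. Then there exists $\widehat U\in\mathbb{F}^{r\times n}$ such that for every $S\subseteq[n]$ of size $r$, $$\lim_{\epsilon\to 0}\det(U_S)=\det(\widehat U_S).$$
   Context: $\mathbb{F}(\epsilon)$ is the field of rational functions in the indeterminate $\epsilon$; for $c\in\mathbb{F}(\epsilon)$, $\lim_{\epsilon\to0}c$ is the limit of the rational function at $\epsilon=0$ (when it exists). For $S\subseteq[n]$, $U_S$ denotes the submatrix of $U$ formed by the columns indexed by $S$. *)

theory Defs
  imports Complex_Main "HOL-Computational_Algebra.Polynomial" "HOL-Computational_Algebra.Fraction_Field"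
    "Jordan_Normal_Form.Determinant" "Jordan_Normal_Form.DL_Submatrix"
begin

text \<open>Rational functions in the indeterminate eps over a field F are the elements of
  the fraction field of F[eps], i.e. the type F poly fract.
  ratfun_has_lim f L: the rational function f has limit L as eps tends to 0, i.e. for
  (any) representation f = p/q with q nonzero, the function x |-> p(x)/q(x) tends to L
  as x tends to 0 (x ranging over F). All representations agree outside a finite set,
  so this does not depend on the chosen representation.\<close>

definition ratfun_has_lim :: "'a::real_normed_field poly fract \<Rightarrow> 'a \<Rightarrow> bool" where
  "ratfun_has_lim f L \<longleftrightarrow>
     (\<exists>p q. q \<noteq> 0 \<and> f = Fract p q \<and> ((\<lambda>x. poly p x / poly q x) \<longlongrightarrow> L) (at 0))"

end

theory Submission
  imports Defs
begin


lemma ev_poly_nz: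
  fixes q :: "'a::real_normed_field poly"
  assumes "q \<noteq> 0" shows "eventually (\<lambda>x. poly q x \<noteq> 0) (at 0)"
proof -
  let ?R = "{x. poly q x = 0} - {0}"
  have fin: "finite ?R" using poly_roots_finite[OF assms] by auto
  have "open (- ?R)" by (rule open_Compl[OF finite_imp_closed[OF fin]])
  then have "eventually (\<lambda>x. x \<in> - ?R) (nhds 0)"
    by (rule eventually_nhds_in_open) auto
  then show ?thesis unfolding eventually_at_filter by (rule eventually_mono) auto
qed

lemma lim_add:
  fixes f g :: "'a::real_normed_field poly fract"
  assumes "ratfun_has_lim f a" "ratfun_has_lim g b"
  shows "ratfun_has_lim (f + g) (a + b)"
proof -
  obtain p q where pq: "q \<noteq> 0" "f = Fract p q" "((\<lambda>x. poly p x / poly q x) \<longlongrightarrow> a) (at 0)"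
    using assms(1) unfolding ratfun_has_lim_def by blast
  obtain p' q' where pq': "q' \<noteq> 0" "g = Fract p' q'" "((\<lambda>x. poly p' x / poly q' x) \<longlongrightarrow> b) (at 0)"
    using assms(2) unfolding ratfun_has_lim_def by blast
  have e: "eventually (\<lambda>x. poly p x / poly q x + poly p' x / poly q' x = poly (p * q' + p' * q) x / poly (q * q') x) (at 0)"
    using eventually_conj[OF ev_poly_nz[OF pq(1)] ev_poly_nz[OF pq'(1)]]
    by (rule eventually_mono) (simp add: field_simps)
  have "((\<lambda>x. poly (p * q' + p' * q) x / poly (q * q') x) \<longlongrightarrow> a + b) (at 0)"
    by (rule Lim_transform_eventually[OF tendsto_add[OF pq(3) pq'(3)] e])
  then show ?thesis unfolding ratfun_has_lim_def using pq pq' by (intro exI[of _ "p * q' + p' * q"] exI[of _ "q * q'"]) auto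
qed

lemma lim_mult:
  fixes f g :: "'a::real_normed_field poly fract"
  assumes "ratfun_has_lim f a" "ratfun_has_lim g b"
  shows "ratfun_has_lim (f * g) (a * b)"
proof -
  obtain p q where pq: "q \<noteq> 0" "f = Fract p q" "((\<lambda>x. poly p x / poly q x) \<longlongrightarrow> a) (at 0)"
    using assms(1) unfolding ratfun_has_lim_def by blast
  obtain p' q' where pq': "q' \<noteq> 0" "g = Fract p' q'" "((\<lambda>x. poly p' x / poly q' x) \<longlongrightarrow> b) (at 0)"
    using assms(2) unfolding ratfun_has_lim_def by blast
  have e: "(\<lambda>x. poly p x / poly q x * (poly p' x / poly q' x)) = (\<lambda>x. poly (p * p') x / poly (q * q') x)"
    by (simp add: fun_eq_iff)
  have "((\<lambda>x. poly (p * p') x / poly (q * q') x) \<longlongrightarrow> a * b) (at 0)"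
    using tendsto_mult[OF pq(3) pq'(3)] unfolding e .
  then show ?thesis unfolding ratfun_has_lim_def using pq pq' by (intro exI[of _ "p * p'"] exI[of _ "q * q'"]) auto
qed

lemma lim_of_int: "ratfun_has_lim (of_int k :: 'a::real_normed_field poly fract) (of_int k)"
proof -
  have "(of_int k :: 'a poly fract) = Fract (of_int k) 1"
  proof -
    have "k = int (nat k) \<or> k = - int (nat (-k))" by arith
    then show ?thesis
    proof
      assume "k = int (nat k)"
      then show ?thesis by (metis of_int_of_nat_eq of_nat_fract)
    next
      assume k: "k = - int (nat (-k))"
      have "(of_int k :: 'a poly fract) = - of_nat (nat (-k))" by (subst k) simp
      also have "\<dots> = Fract (- of_nat (nat (-k))) 1" by (simp add: of_nat_fract)
      also have "(- of_nat (nat (-k)) :: 'a poly) = of_int k" by (subst k) simp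
      finally show ?thesis .
    qed
  qed
  then show ?thesis unfolding ratfun_has_lim_def
    by (intro exI[of _ "of_int k"] exI[of _ 1]) (auto simp: poly_of_int)
qed

lemma lim_sum:
  fixes f :: "'b \<Rightarrow> 'a::real_normed_field poly fract"
  assumes "finite A" "\<And>i. i \<in> A \<Longrightarrow> ratfun_has_lim (f i) (g i)"
  shows "ratfun_has_lim (sum f A) (sum g A)"
  using assms by (induction A rule: finite_induct) (auto intro!: lim_add lim_of_int[of 0, simplified])

lemma lim_prod:
  fixes f :: "'b \<Rightarrow> 'a::real_normed_field poly fract"
  assumes "finite A" "\<And>i. i \<in> A \<Longrightarrow> ratfun_has_lim (f i) (g i)"
  shows "ratfun_has_lim (prod f A) (prod g A)"
  using assms by (induction A rule: finite_induct) (auto intro!: lim_mult lim_of_int[of 1, simplified])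

lemma lim_det:
  fixes M :: "'a::real_normed_field poly fract mat"
  assumes "M \<in> carrier_mat m m" "N \<in> carrier_mat m m"
    "\<And>i j. i < m \<Longrightarrow> j < m \<Longrightarrow> ratfun_has_lim (M $$ (i,j)) (N $$ (i,j))"
  shows "ratfun_has_lim (det M) (det N)"
  unfolding det_def'[OF assms(1)] det_def'[OF assms(2)]
  by (intro lim_sum lim_mult lim_of_int lim_prod) (auto simp: assms(3) finite_permutations permutes_in_image)

lemma decomp0:
  fixes p :: "'a::real_normed_field poly"
  assumes "p \<noteq> 0"
  obtains k p1 where "p = [:0,1:] ^ k * p1" "poly p1 0 \<noteq> 0"
proof -
  obtain p1 where "p = [:- 0, 1:] ^ order 0 p * p1" "\<not> [:- 0, 1:] dvd p1"
    using order_decomp[OF assms, of 0] by blast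
  then show ?thesis using that[of "order 0 p" p1] poly_eq_0_iff_dvd[of p1 0] by auto
qed

lemma lim_ratio:
  fixes p1 q1 :: "'a::real_normed_field poly"
  assumes "poly q1 0 \<noteq> 0" "b \<le> a"
  shows "\<exists>L. ratfun_has_lim (Fract ([:0,1:] ^ a * p1) ([:0,1:] ^ b * q1)) L"
proof -
  let ?g = "\<lambda>x. x ^ (a - b) * poly p1 x / poly q1 x"
  have q1: "q1 \<noteq> 0" using assms(1) by auto
  have "isCont ?g 0" using assms(1) by (intro continuous_intros) auto
  then have t: "(?g \<longlongrightarrow> ?g 0) (at 0)" by (simp add: isCont_def)
  have e: "eventually (\<lambda>x. ?g x = poly ([:0,1:] ^ a * p1) x / poly ([:0,1:] ^ b * q1) x) (at 0)"
    unfolding eventually_at_filter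
  proof (rule always_eventually, intro allI impI)
    fix x :: 'a assume x: "x \<noteq> 0"
    have "x ^ a = x ^ (a - b) * x ^ b" using assms(2) by (simp add: power_add[symmetric])
    then show "?g x = poly ([:0,1:] ^ a * p1) x / poly ([:0,1:] ^ b * q1) x"
      using x by (simp add: poly_power)
  qed
  show ?thesis unfolding ratfun_has_lim_def
    apply (rule exI[of _ "?g 0"], rule exI[of _ "[:0,1:] ^ a * p1"], rule exI[of _ "[:0,1:] ^ b * q1"])
    using q1 Lim_transform_eventually[OF t e] by auto
qed

lemma lim_total:
  fixes h :: "'a::real_normed_field poly fract"
  assumes "h \<noteq> 0"
  shows "(\<exists>L. ratfun_has_lim h L) \<or> (\<exists>L. ratfun_has_lim (inverse h) L)"
proof -
  obtain p q where h: "h = Fract p q" "q \<noteq> 0" "p \<noteq> 0"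
    using assms by (cases h rule: Fract_cases_nonzero) auto
  obtain a p1 where p: "p = [:0,1:] ^ a * p1" "poly p1 0 \<noteq> 0" using decomp0[OF h(3)] by blast
  obtain b q1 where q: "q = [:0,1:] ^ b * q1" "poly q1 0 \<noteq> 0" using decomp0[OF h(2)] by blast
  show ?thesis
  proof (cases "b \<le> a")
    case True
    then show ?thesis using lim_ratio[OF q(2) True, of p1] h p q by auto
  next
    case False
    then show ?thesis using lim_ratio[OF p(2), of a b q1] h p q by auto
  qed
qed


lemma finite_min_rel:
  assumes "finite F" "F \<noteq> {}" "F \<subseteq> X"
    and tot: "\<And>x y. x \<in> X \<Longrightarrow> y \<in> X \<Longrightarrow> R x y \<or> R y x"
    and tr: "\<And>x y z. x \<in> X \<Longrightarrow> y \<in> X \<Longrightarrow> z \<in> X \<Longrightarrow> R x y \<Longrightarrow> R y z \<Longrightarrow> R x z"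
  shows "\<exists>x\<in>F. \<forall>y\<in>F. R x y"
  using assms(1,2,3)
proof (induction F rule: finite_ne_induct)
  case (singleton x)
  then have "x \<in> X" by simp
  then have "R x x" using tot by blast
  then show ?case by blast
next
  case (insert a F)
  have aX: "a \<in> X" and FX: "F \<subseteq> X" using insert.prems by auto
  obtain m where m: "m \<in> F" "\<forall>y\<in>F. R m y" using insert.IH[OF FX] by blast
  have mX: "m \<in> X" using m(1) FX by blast
  show ?case
  proof (cases "R m a")
    case True
    then show ?thesis using m by blast
  next
    case False
    then have ram: "R a m" using tot[OF aX mX] by blast
    have "R a y" if "y \<in> insert a F" for y
    proof (cases "y = a")
      case True
      then show ?thesis using tot[OF aX aX] by blast
    next
      case False
      then have "y \<in> F" using that by simp
      then show ?thesis using tr[OF aX mX, of y] ram m FX by blast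
    qed
    then show ?thesis by blast
  qed
qed

lemma pick_atLeast0: "i < r \<Longrightarrow> pick {0..<r} i = i"
proof -
  assume i: "i < r"
  have "{a \<in> {0..<r}. a < i} = {0..<i}" using i by auto
  then show ?thesis using pick_card_in_set[of i "{0..<r}"] i by simp
qed

lemma sub_dims:
  assumes "U \<in> carrier_mat r n" "S \<subseteq> {0..<n}"
  shows "{i. i < dim_row U \<and> i \<in> {0..<r}} = {0..<r}" "{j. j < dim_col U \<and> j \<in> S} = S"
proof -
  have d: "dim_row U = r" "dim_col U = n" using assms(1) by simp_all
  show "{i. i < dim_row U \<and> i \<in> {0..<r}} = {0..<r}" unfolding d by auto
  show "{j. j < dim_col U \<and> j \<in> S} = S" unfolding d using assms(2) by auto
qed

lemma sub_carrier:
  assumes "U \<in> carrier_mat r n" "S \<subseteq> {0..<n}"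
  shows "submatrix U {0..<r} S \<in> carrier_mat r (card S)"
proof -
  have "dim_row (submatrix U {0..<r} S) = r" "dim_col (submatrix U {0..<r} S) = card S"
    unfolding dim_submatrix sub_dims[OF assms] by simp_all
  then show ?thesis by (rule carrier_matI)
qed

lemma sub_index:
  assumes "U \<in> carrier_mat r n" "S \<subseteq> {0..<n}" "i < r" "k < card S"
  shows "submatrix U {0..<r} S $$ (i, k) = U $$ (i, pick S k)"
proof -
  have "submatrix U {0..<r} S $$ (i, k) = U $$ (pick {0..<r} i, pick S k)"
    by (rule submatrix_index) (unfold sub_dims[OF assms(1,2)], simp_all add: assms(3,4))
  then show ?thesis using pick_atLeast0[OF assms(3)] by simp
qed

lemma sub_eq:
  assumes "U \<in> carrier_mat r n" "S \<subseteq> {0..<n}" "card S = m"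
  shows "submatrix U {0..<r} S = mat r m (\<lambda>(i,k). U $$ (i, pick S k))"
proof (rule eq_matI)
  have c: "submatrix U {0..<r} S \<in> carrier_mat r m" using sub_carrier[OF assms(1,2)] assms(3) by simp
  show "dim_row (submatrix U {0..<r} S) = dim_row (mat r m (\<lambda>(i,k). U $$ (i, pick S k)))" using c by simp
  show "dim_col (submatrix U {0..<r} S) = dim_col (mat r m (\<lambda>(i,k). U $$ (i, pick S k)))" using c by simp
  fix i j assume "i < dim_row (mat r m (\<lambda>(i,k). U $$ (i, pick S k)))" "j < dim_col (mat r m (\<lambda>(i,k). U $$ (i, pick S k)))"
  then have "i < r" "j < card S" using assms(3) by simp_all
  then show "submatrix U {0..<r} S $$ (i, j) = mat r m (\<lambda>(i,k). U $$ (i, pick S k)) $$ (i, j)"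
    using sub_index[OF assms(1,2)] assms(3) by simp
qed

lemma pick_lt:
  assumes "S \<subseteq> {0..<n}" "k < card S" shows "pick S k < n"
  using pick_in_set[of k S] assms by auto

lemma col_det:
  fixes U :: "'b::comm_ring_1 mat"
  assumes U: "U \<in> carrier_mat r n" and \<sigma>: "\<And>k. k < r \<Longrightarrow> \<sigma> k < n" and inj: "inj_on \<sigma> {0..<r}"
  shows "\<exists>p. p permutes {0..<r} \<and>
    det (mat r r (\<lambda>(i,k). U $$ (i, \<sigma> k))) = signof p * det (submatrix U {0..<r} (\<sigma> ` {0..<r}))"
proof -
  define S where "S = \<sigma> ` {0..<r}"
  have S: "S \<subseteq> {0..<n}" "card S = r" using \<sigma> inj card_image[OF inj] unfolding S_def by auto
  define M where "M = submatrix U {0..<r} S"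
  have M: "M = mat r r (\<lambda>(i,k). U $$ (i, pick S k))" unfolding M_def by (rule sub_eq[OF U S])
  define p where "p = (\<lambda>k. if k < r then card {a\<in>S. a < \<sigma> k} else k)"
  have pk: "pick S (p k) = \<sigma> k" if "k < r" for k
    using pick_card_in_set[of "\<sigma> k" S] that unfolding p_def S_def by auto
  have prange: "p k < r" if "k < r" for k
  proof -
    have "{a\<in>S. a < \<sigma> k} \<subset> S" using that unfolding S_def by auto
    then have "card {a\<in>S. a < \<sigma> k} < card S" by (rule psubset_card_mono[rotated]) (simp add: S_def)
    then show ?thesis using that S(2) unfolding p_def by auto
  qed
  have pinj: "inj_on p {0..<r}"
  proof (rule inj_onI)
    fix k l assume "k \<in> {0..<r}" "l \<in> {0..<r}" "p k = p l"
    then have "\<sigma> k = \<sigma> l" using pk by (metis atLeastLessThan_iff)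
    then show "k = l" using inj \<open>k \<in> {0..<r}\<close> \<open>l \<in> {0..<r}\<close> by (meson inj_onD)
  qed
  have "p ` {0..<r} \<subseteq> {0..<r}" using prange by auto
  then have "p ` {0..<r} = {0..<r}" using endo_inj_surj[OF _ _ pinj] by auto
  then have "bij_betw p {0..<r} {0..<r}" using pinj by (simp add: bij_betw_def)
  then have pp: "p permutes {0..<r}" by (rule bij_imp_permutes) (auto simp: p_def)
  have eq: "transpose_mat (mat r r (\<lambda>(i,k). U $$ (i, \<sigma> k))) = mat r r (\<lambda>(k,i). transpose_mat M $$ (p k, i))"
    by (rule eq_matI) (auto simp: M pk prange)
  have "det (mat r r (\<lambda>(i,k). U $$ (i, \<sigma> k))) = det (transpose_mat (mat r r (\<lambda>(i,k). U $$ (i, \<sigma> k))))"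
    by (rule det_transpose[symmetric]) auto
  also have "\<dots> = signof p * det (transpose_mat M)"
    unfolding eq by (rule det_permute_rows[OF _ pp]) (auto simp: M)
  also have "det (transpose_mat M) = det M" by (rule det_transpose) (auto simp: M)
  finally show ?thesis using pp unfolding M_def S_def by blast
qed


lemma main:
  fixes U :: "'a::real_normed_field poly fract mat"
  assumes U: "U \<in> carrier_mat r n"
  and lims: "\<forall>S. S \<subseteq> {0..<n} \<and> card S = r \<longrightarrow> (\<exists>L. ratfun_has_lim (det (submatrix U {0..<r} S)) L)"
  shows "\<exists>Uh :: 'a mat. Uh \<in> carrier_mat r n \<and> (\<forall>S. S \<subseteq> {0..<n} \<and> card S = r \<longrightarrow>
            ratfun_has_lim (det (submatrix U {0..<r} S)) (det (submatrix Uh {0..<r} S)))"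
proof -
  define D where "D S = det (submatrix U {0..<r} S)" for S
  define Fam where "Fam = {S. S \<subseteq> {0..<n} \<and> card S = r \<and> D S \<noteq> 0}"
  have finFam: "finite Fam"
    by (rule finite_subset[of _ "Pow {0..<n}"]) (auto simp: Fam_def)
  have lim0: "ratfun_has_lim (0 :: 'a poly fract) 0" using lim_of_int[of 0] by simp
  consider (r0) "r = 0" | (empty) "r > 0" "Fam = {}" | (ne) "r > 0" "Fam \<noteq> {}" by blast
  then show ?thesis
  proof cases
    case r0
    show ?thesis
    proof (intro exI[of _ "0\<^sub>m r n :: 'a mat"] conjI allI impI)
      show "0\<^sub>m r n \<in> carrier_mat r n" by simp
      fix S assume S: "S \<subseteq> {0..<n} \<and> card S = r"
      have c1: "submatrix U {0..<r} S \<in> carrier_mat 0 0" using sub_carrier[OF U conjunct1[OF S]] S r0 by simp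
      have c2: "submatrix (0\<^sub>m r n :: 'a mat) {0..<r} S \<in> carrier_mat 0 0"
        using sub_carrier[OF zero_carrier_mat[of r n] conjunct1[OF S]] S r0 by simp
      show "ratfun_has_lim (det (submatrix U {0..<r} S)) (det (submatrix (0\<^sub>m r n) {0..<r} S))"
        by (rule lim_det[OF c1 c2]) simp
    qed
  next
    case empty
    show ?thesis
    proof (intro exI[of _ "0\<^sub>m r n :: 'a mat"] conjI allI impI)
      show "0\<^sub>m r n \<in> carrier_mat r n" by simp
      fix S assume S: "S \<subseteq> {0..<n} \<and> card S = r"
      have D0: "D S = 0" using S empty(2) unfolding Fam_def by blast
      have "submatrix (0\<^sub>m r n :: 'a mat) {0..<r} S = mat r r (\<lambda>(i,k). (0\<^sub>m r n :: 'a mat) $$ (i, pick S k))"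
        by (rule sub_eq[OF zero_carrier_mat]) (use S in auto)
      also have "\<dots> = 0\<^sub>m r r"
        by (rule eq_matI) (use S pick_lt in auto)
      finally have "det (submatrix (0\<^sub>m r n :: 'a mat) {0..<r} S) = 0" using empty(1) by simp
      then show "ratfun_has_lim (det (submatrix U {0..<r} S)) (det (submatrix (0\<^sub>m r n) {0..<r} S))"
        using D0 lim0 unfolding D_def by simp
    qed
  next
    case ne
    define R where "R S T = (\<exists>L. ratfun_has_lim (D T / D S) L)" for S T
    have tot: "R S T \<or> R T S" if "S \<in> Fam" "T \<in> Fam" for S T
    proof -
      have nz: "D T / D S \<noteq> 0" using that unfolding Fam_def by simp
      have "inverse (D T / D S) = D S / D T" by simp
      then show ?thesis using lim_total[OF nz] unfolding R_def by metis
    qed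
    have tr: "R S W" if h: "S \<in> Fam" "T \<in> Fam" "W \<in> Fam" "R S T" "R T W" for S T W
    proof -
      have "D T \<noteq> 0" using h(2) unfolding Fam_def by simp
      then have e: "D W / D S = (D T / D S) * (D W / D T)" by simp
      obtain a b where "ratfun_has_lim (D T / D S) a" "ratfun_has_lim (D W / D T) b"
        using h(4,5) unfolding R_def by blast
      then show ?thesis unfolding R_def e using lim_mult by blast
    qed
    obtain S0 where S0: "S0 \<in> Fam" "\<forall>T\<in>Fam. R S0 T"
      using finite_min_rel[OF finFam ne(2) subset_refl, of R] tot tr by blast
    have S0n: "S0 \<subseteq> {0..<n}" and S0r: "card S0 = r" and D0: "D S0 \<noteq> 0" using S0(1) unfolding Fam_def by auto
    have R0: "\<exists>L. ratfun_has_lim (D T / D S0) L" if "T \<subseteq> {0..<n}" "card T = r" for T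
    proof (cases "D T = 0")
      case True
      then show ?thesis using lim0 by auto
    next
      case False
      then have "T \<in> Fam" using that unfolding Fam_def by auto
      then show ?thesis using S0(2) unfolding R_def by blast
    qed
    define A where "A = submatrix U {0..<r} S0"
    have A: "A \<in> carrier_mat r r" using sub_carrier[OF U S0n] S0r unfolding A_def by simp
    have dA: "det A = D S0" unfolding A_def D_def ..
    define c where "c = inverse (D S0)"
    define B where "B = c \<cdot>\<^sub>m adj_mat A"
    have adj: "adj_mat A \<in> carrier_mat r r" "A * adj_mat A = det A \<cdot>\<^sub>m 1\<^sub>m r" "adj_mat A * A = det A \<cdot>\<^sub>m 1\<^sub>m r"
      using adj_mat[OF A] by auto
    have B: "B \<in> carrier_mat r r" unfolding B_def using adj(1) by simp
    have AB: "A * B = 1\<^sub>m r"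
    proof -
      have "A * B = c \<cdot>\<^sub>m (A * adj_mat A)" unfolding B_def by (rule mult_smult_distrib[OF A adj(1)])
      also have "\<dots> = 1\<^sub>m r" unfolding adj(2) dA
        by (rule eq_matI) (use D0 in \<open>simp_all add: c_def\<close>)
      finally show ?thesis .
    qed
    have BA: "B * A = 1\<^sub>m r"
    proof -
      have "B * A = c \<cdot>\<^sub>m (adj_mat A * A)" unfolding B_def by (rule mult_smult_assoc_mat[OF adj(1) A])
      also have "\<dots> = 1\<^sub>m r" unfolding adj(3) dA
        by (rule eq_matI) (use D0 in \<open>simp_all add: c_def\<close>)
      finally show ?thesis .
    qed
    have detB: "det B * D S0 = 1"
      using det_mult[OF B A] BA dA by simp
    define V where "V = B * U"
    have V: "V \<in> carrier_mat r n" unfolding V_def using B U by simp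
    have Ventry: "\<exists>L. ratfun_has_lim (V $$ (i,j)) L" if ij: "i < r" "j < n" for i j
    proof -
      define x where "x = col V j"
      have x: "x \<in> carrier_vec r" unfolding x_def carrier_vec_def using V by simp
      have cV: "col V j = B *\<^sub>v col U j" unfolding V_def by (rule col_mult2[OF B U ij(2)])
      have cu: "col U j \<in> carrier_vec r" unfolding carrier_vec_def using U by simp
      have "A *\<^sub>v x = (A * B) *\<^sub>v col U j" unfolding x_def cV using assoc_mult_mat_vec[OF A B cu] by simp
      also have "\<dots> = col U j" unfolding AB using cu by simp
      finally have Ax: "A *\<^sub>v x = col U j" .
      have cr: "det (replace_col A (col U j) i) = V $$ (i,j) * D S0"
        using cramer_lemma_mat[OF A x ij(1)] unfolding Ax dA using V ij by (simp add: x_def)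
      define \<sigma> where "\<sigma> k = (if k = i then j else pick S0 k)" for k
      have \<sigma>n: "\<sigma> k < n" if "k < r" for k
        unfolding \<sigma>_def using pick_lt[OF S0n, of k] that S0r ij by auto
      have rc: "replace_col A (col U j) i = mat r r (\<lambda>(a,k). U $$ (a, \<sigma> k))"
        by (rule eq_matI) (use A U ij sub_index[OF U S0n] S0r in \<open>auto simp: replace_col_def \<sigma>_def A_def\<close>)
      have Vij: "V $$ (i,j) = det (mat r r (\<lambda>(a,k). U $$ (a, \<sigma> k))) / D S0"
        using cr D0 unfolding rc by simp
      show ?thesis
      proof (cases "inj_on \<sigma> {0..<r}")
        case True
        obtain p where p: "det (mat r r (\<lambda>(i,k). U $$ (i, \<sigma> k))) = signof p * D (\<sigma> ` {0..<r})"
          using col_det[OF U \<sigma>n True] unfolding D_def by blast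
        have T: "\<sigma> ` {0..<r} \<subseteq> {0..<n}" "card (\<sigma> ` {0..<r}) = r"
          using \<sigma>n card_image[OF True] by auto
        obtain L where L: "ratfun_has_lim (D (\<sigma> ` {0..<r}) / D S0) L" using R0[OF T] by blast
        have "V $$ (i,j) = signof p * (D (\<sigma> ` {0..<r}) / D S0)" unfolding Vij p by simp
        then show ?thesis using lim_mult[OF lim_of_int L] by metis
      next
        case False
        then obtain k l where kl: "k < r" "l < r" "k \<noteq> l" "\<sigma> k = \<sigma> l"
          unfolding inj_on_def by auto
        have "det (mat r r (\<lambda>(a,k). U $$ (a, \<sigma> k))) = 0"
          by (rule det_identical_columns[OF _ kl(3) kl(1) kl(2)]) (use kl in \<open>auto intro!: eq_vecI\<close>)
        then have "V $$ (i,j) = 0" unfolding Vij by simp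
        then show ?thesis using lim0 by auto
      qed
    qed
    obtain c0 where c0: "ratfun_has_lim (D S0) c0" using lims S0n S0r unfolding D_def by blast
    define V' where "V' = multrow 0 (D S0) V"
    have V': "V' \<in> carrier_mat r n" unfolding V'_def using V by simp
    have V'entry: "\<exists>L. ratfun_has_lim (V' $$ (i,j)) L" if ij: "i < r" "j < n" for i j
    proof (cases "i = 0")
      case True
      obtain L where "ratfun_has_lim (V $$ (i,j)) L" using Ventry[OF ij] by blast
      then have "ratfun_has_lim (D S0 * V $$ (i,j)) (c0 * L)" using lim_mult[OF c0] by blast
      then show ?thesis unfolding V'_def using V ij True by auto
    next
      case False
      then show ?thesis unfolding V'_def using V ij Ventry[OF ij] by simp
    qed
    define Uh where "Uh = mat r n (\<lambda>(i,j). SOME L. ratfun_has_lim (V' $$ (i,j)) L)"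
    have Uh: "Uh \<in> carrier_mat r n" unfolding Uh_def by simp
    have UhL: "ratfun_has_lim (V' $$ (i,j)) (Uh $$ (i,j))" if ij: "i < r" "j < n" for i j
      unfolding Uh_def using ij someI_ex[OF V'entry[OF ij]] by simp
    show ?thesis
    proof (intro exI[of _ Uh] conjI allI impI Uh)
      fix S assume S: "S \<subseteq> {0..<n} \<and> card S = r"
      have Sn: "S \<subseteq> {0..<n}" and Sr: "card S = r" using S by auto
      define M where "M = submatrix U {0..<r} S"
      have M: "M \<in> carrier_mat r r" using sub_carrier[OF U Sn] Sr unfolding M_def by simp
      have colM: "col M k = col U (pick S k)" if "k < r" for k
        by (rule eq_vecI) (use M U that sub_index[OF U Sn] Sr pick_lt[OF Sn] in \<open>auto simp: M_def\<close>)
      have subV': "submatrix V' {0..<r} S = multrow 0 (D S0) (B * M)"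
      proof -
        have "submatrix V' {0..<r} S = mat r r (\<lambda>(a,k). V' $$ (a, pick S k))"
          by (rule sub_eq[OF V' Sn Sr])
        also have "\<dots> = multrow 0 (D S0) (B * M)"
          by (rule eq_matI) (use B M V U colM pick_lt[OF Sn] Sr in \<open>auto simp: V'_def V_def\<close>)
        finally show ?thesis .
      qed
      have dV': "det (submatrix V' {0..<r} S) = D S"
      proof -
        have "det (submatrix V' {0..<r} S) = D S0 * (det B * det M)"
          unfolding subV' using det_multrow[OF ne(1), of "B * M" "D S0"] det_mult[OF B M] B M by simp
        also have "\<dots> = (det B * D S0) * det M" by (simp add: ac_simps)
        also have "\<dots> = D S" using detB unfolding M_def D_def by simp
        finally show ?thesis .
      qed
      have "ratfun_has_lim (det (submatrix V' {0..<r} S)) (det (submatrix Uh {0..<r} S))"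
      proof (rule lim_det)
        show "submatrix V' {0..<r} S \<in> carrier_mat r r" using sub_carrier[OF V' Sn] Sr by simp
        show "submatrix Uh {0..<r} S \<in> carrier_mat r r" using sub_carrier[OF Uh Sn] Sr by simp
        fix a k assume "a < r" "k < r"
        then show "ratfun_has_lim (submatrix V' {0..<r} S $$ (a, k)) (submatrix Uh {0..<r} S $$ (a, k))"
          using sub_index[OF V' Sn] sub_index[OF Uh Sn] Sr UhL pick_lt[OF Sn] by simp
      qed
      then show "ratfun_has_lim (det (submatrix U {0..<r} S)) (det (submatrix Uh {0..<r} S))"
        unfolding dV' D_def .
    qed
  qed
qed


theorem lemma10:
  shows
   "(\<forall>(r::nat) (n::nat) (U :: real poly fract mat).
       U \<in> carrier_mat r n \<longrightarrow>
       (\<forall>S. S \<subseteq> {0..<n} \<and> card S = r \<longrightarrow>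
            (\<exists>L. ratfun_has_lim (det (submatrix U {0..<r} S)) L)) \<longrightarrow>
       (\<exists>Uh :: real mat. Uh \<in> carrier_mat r n \<and>
          (\<forall>S. S \<subseteq> {0..<n} \<and> card S = r \<longrightarrow>
             ratfun_has_lim (det (submatrix U {0..<r} S)) (det (submatrix Uh {0..<r} S)))))
  \<and>
   (\<forall>(r::nat) (n::nat) (U :: complex poly fract mat).
       U \<in> carrier_mat r n \<longrightarrow>
       (\<forall>S. S \<subseteq> {0..<n} \<and> card S = r \<longrightarrow>
            (\<exists>L. ratfun_has_lim (det (submatrix U {0..<r} S)) L)) \<longrightarrow>
       (\<exists>Uh :: complex mat. Uh \<in> carrier_mat r n \<and>
          (\<forall>S. S \<subseteq> {0..<n} \<and> card S = r \<longrightarrow>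
             ratfun_has_lim (det (submatrix U {0..<r} S)) (det (submatrix Uh {0..<r} S)))))"
  by (intro conjI allI impI; rule main; assumption)

end
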